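(* Let $\mathcal G$ be a finite groupoid and $\alpha=(S_g,\alpha_g)_{g\in\mathcal G}$ a unital partial action of $\mathcal G$ on a commutative ring $S$ with $S_g=S1_g$ ($1_g$ central idempotents) and $S=\bigoplus_{z\in\mathcal G_0}S_z$. Let $\mathcal G_0=Z_1\,\dot\cup\cdots\dot\cup\,Z_r$ be the partition of $\mathcal G_0$ into the object sets of the connected components $\mathcal G_1,\dots,\mathcal G_r$ of $\mathcal G$ (where $\mathcal G_j$ is the full subgroupoid on $Z_j$), let $S_j=\bigoplus_{y\in Z_j}S_y$, let $\alpha_j=(S_g,\alpha_g)_{g\in\mathcal G_j}$ be the restricted partial action of $\mathcal G_j$ on $S_j$, and put $R=S^{\alpha_{\mathcal G}}$ and $R_j=S_j^{\alpha_j}$. Then $R\subseteq S$ is an $\alpha$-partial Galois extension if and only if $R_j\subseteq S_j$ is an $\alpha_j$-partial Galois extension for every $1\le j\le r$.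
   Context: A groupoid is a small category in which every morphism is invertible; $\mathcal G_0$ is its set of objects, identified with identity morphisms; $s(g),t(g)$ are source and target, $\mathcal G(x,y)=\{g:s(g)=x,t(g)=y\}$, $gh$ is defined iff $s(g)=t(h)$. Connected components are the full subgroupoids on the equivalence classes of $x\sim y\iff\mathcal G(x,y)\ne\emptyset$. A partial action $\alpha=(S_g,\alpha_g)_{g\in\mathcal G}$ of $\mathcal G$ on a ring $S$: for each $g$, $S_{t(g)}$ is an ideal of $S$, $S_g$ an ideal of $S_{t(g)}$, $\alpha_g:S_{g^{-1}}\to S_g$ a ring isomorphism; $\alpha_x=\mathrm{id}_{S_x}$ for $x\in\mathcal G_0$; for composable $(g,h)$, $\alpha_h^{-1}(S_{g^{-1}}\cap S_h)\subseteq S_{(gh)^{-1}}$ and $\alpha_g\alpha_h(a)=\alpha_{gh}(a)$ on that set. Unital means $S_g=S1_g$ with $1_g$ a central idempotent. For a partial action $\beta=(A_g,\beta_g)_{g\in\mathcal K}$ of a groupoid $\mathcal K$ on a ring $A$, the invariant subring is $A^{\beta}=\{a\in A:\beta_g(a1_{g^{-1}})=a1_g\ \forall g\in\mathcal K\}$. An extension $B\subseteq A$ is a $\beta$-partial Galois extension if $B=A^{\beta}$ and there exist $m\ge1$ and $a_i,b_i\in A$ ($1\le i\le m$) with $\sum_{i=1}^m a_i\beta_g(b_i1_{g^{-1}})=\delta_{z,g}1_z$ for all $z\in\mathcal K_0$, $g\in\mathcal K$, i.e. the sum equals $1_g$ when $g\in\mathcal K_0$ and $0$ when $g\notin\mathcal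 K_0$. *)

theory Defs
  imports Main
begin

text \<open>Objects are identified with identity morphisms: the object set is s ` G.\<close>

definition objs :: "'g set \<Rightarrow> ('g \<Rightarrow> 'g) \<Rightarrow> 'g set" where
  "objs G s = s ` G"

definition groupoid ::
  "'g set \<Rightarrow> ('g \<Rightarrow> 'g) \<Rightarrow> ('g \<Rightarrow> 'g) \<Rightarrow> ('g \<Rightarrow> 'g \<Rightarrow> 'g) \<Rightarrow> ('g \<Rightarrow> 'g) \<Rightarrow> bool" where
  "groupoid G s t mul iv \<longleftrightarrow>
     (\<forall>g\<in>G. s g \<in> G \<and> t g \<in> G) \<and>
     (\<forall>x\<in>objs G s. s x = x \<and> t x = x) \<and>
     (\<forall>g\<in>G. \<forall>h\<in>G. s g = t h \<longrightarrow>
        mul g h \<in> G \<and> s (mul g h) = s h \<and> t (mul g h) = t g) \<and>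
     (\<forall>g\<in>G. \<forall>h\<in>G. \<forall>k\<in>G. s g = t h \<longrightarrow> s h = t k \<longrightarrow>
        mul (mul g h) k = mul g (mul h k)) \<and>
     (\<forall>g\<in>G. mul (t g) g = g \<and> mul g (s g) = g) \<and>
     (\<forall>g\<in>G. iv g \<in> G \<and> s (iv g) = t g \<and> t (iv g) = s g \<and>
        mul (iv g) g = s g \<and> mul g (iv g) = t g)"

definition comp_objs :: "'g set \<Rightarrow> ('g \<Rightarrow> 'g) \<Rightarrow> ('g \<Rightarrow> 'g) \<Rightarrow> 'g \<Rightarrow> 'g set" where
  "comp_objs G s t x = {y \<in> objs G s. \<exists>g\<in>G. s g = x \<and> t g = y}"

definition components_objs :: "'g set \<Rightarrow> ('g \<Rightarrow> 'g) \<Rightarrow> ('g \<Rightarrow> 'g) \<Rightarrow> 'g set set" where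
  "components_objs G s t = comp_objs G s t ` objs G s"

definition full_sub :: "'g set \<Rightarrow> ('g \<Rightarrow> 'g) \<Rightarrow> ('g \<Rightarrow> 'g) \<Rightarrow> 'g set \<Rightarrow> 'g set" where
  "full_sub G s t Z = {g \<in> G. s g \<in> Z \<and> t g \<in> Z}"

definition principal :: "'a::comm_ring_1 \<Rightarrow> 'a set" where
  "principal c = {x * c | x. True}"

text \<open>Unital partial action (S_g = A 1_g, given by the idempotents e g) of the groupoid
  (K, s, t, mul, iv) on the ring A = principal u, whose unit is the idempotent u
  (for u = 1 this is the whole ring).\<close>

definition unital_partial_action ::
  "'g set \<Rightarrow> ('g \<Rightarrow> 'g) \<Rightarrow> ('g \<Rightarrow> 'g) \<Rightarrow> ('g \<Rightarrow> 'g \<Rightarrow> 'g) \<Rightarrow> ('g \<Rightarrow> 'g) \<Rightarrow>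
   'a::comm_ring_1 \<Rightarrow> ('g \<Rightarrow> 'a) \<Rightarrow> ('g \<Rightarrow> 'a \<Rightarrow> 'a) \<Rightarrow> bool" where
  "unital_partial_action K s t mul iv u e \<alpha> \<longleftrightarrow>
     u * u = u \<and>
     (\<forall>g\<in>K. e g * e g = e g) \<and>
     (\<forall>g\<in>K. e (t g) * u = e (t g)) \<and>
     (\<forall>g\<in>K. e g * e (t g) = e g) \<and>
     (\<forall>g\<in>K. bij_betw (\<alpha> g) (principal (e (iv g))) (principal (e g)) \<and>
        (\<forall>a\<in>principal (e (iv g)). \<forall>b\<in>principal (e (iv g)).
           \<alpha> g (a + b) = \<alpha> g a + \<alpha> g b \<and> \<alpha> g (a * b) = \<alpha> g a * \<alpha> g b)) \<and>
     (\<forall>x\<in>objs K s. \<forall>a\<in>principal (e x). \<alpha> x a = a) \<and>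
     (\<forall>g\<in>K. \<forall>h\<in>K. s g = t h \<longrightarrow>
        (\<forall>a\<in>principal (e (iv h)). \<alpha> h a \<in> principal (e (iv g)) \<longrightarrow>
           a \<in> principal (e (iv (mul g h))) \<and> \<alpha> g (\<alpha> h a) = \<alpha> (mul g h) a))"

definition invariants ::
  "'g set \<Rightarrow> ('g \<Rightarrow> 'g) \<Rightarrow> 'a::comm_ring_1 \<Rightarrow> ('g \<Rightarrow> 'a) \<Rightarrow> ('g \<Rightarrow> 'a \<Rightarrow> 'a) \<Rightarrow> 'a set" where
  "invariants K iv u e \<beta> =
     {a \<in> principal u. \<forall>g\<in>K. \<beta> g (a * e (iv g)) = a * e g}"

definition partial_galois ::
  "'a::comm_ring_1 set \<Rightarrow> 'g set \<Rightarrow> ('g \<Rightarrow> 'g) \<Rightarrow> ('g \<Rightarrow> 'g) \<Rightarrow> 'a \<Rightarrow> ('g \<Rightarrow> 'a) \<Rightarrow>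
   ('g \<Rightarrow> 'a \<Rightarrow> 'a) \<Rightarrow> bool" where
  "partial_galois B K s iv u e \<beta> \<longleftrightarrow>
     B = invariants K iv u e \<beta> \<and>
     (\<exists>m::nat. \<exists>a b :: nat \<Rightarrow> 'a. m \<ge> 1 \<and>
        (\<forall>i<m. a i \<in> principal u \<and> b i \<in> principal u) \<and>
        (\<forall>g\<in>K. (\<Sum>i<m. a i * \<beta> g (b i * e (iv g))) =
                 (if g \<in> objs K s then e g else 0)))"

end

theory Submission
  imports Defs
begin

lemma principal_iff: "x \<in> principal c \<longleftrightarrow> (\<exists>y. x = y * c)"
  unfolding principal_def by auto

lemma principal_idem: "c * c = c \<Longrightarrow> x \<in> principal c \<Longrightarrow> x * c = x"
  unfolding principal_def by (auto simp: mult.assoc)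

lemma principal_mult: "x * c \<in> principal c"
  unfolding principal_def by auto

lemma sum_single: "finite A \<Longrightarrow> a \<in> A \<Longrightarrow> (\<And>x. x \<in> A \<Longrightarrow> x \<noteq> a \<Longrightarrow> f x = 0) \<Longrightarrow> sum f A = f a"
  by (simp add: sum.remove)

locale PA =
  fixes G :: "'g set" and s t :: "'g \<Rightarrow> 'g" and mul :: "'g \<Rightarrow> 'g \<Rightarrow> 'g"
    and iv :: "'g \<Rightarrow> 'g"
    and e :: "'g \<Rightarrow> 'a::comm_ring_1" and \<alpha> :: "'g \<Rightarrow> 'a \<Rightarrow> 'a"
  assumes grp: "groupoid G s t mul iv"
    and fin: "finite G"
    and upa: "unital_partial_action G s t mul iv 1 e \<alpha>"
    and sum1: "(\<Sum>z\<in>objs G s. e z) = 1"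
    and orth: "\<forall>z\<in>objs G s. \<forall>w\<in>objs G s. z \<noteq> w \<longrightarrow> e z * e w = 0"
begin

abbreviation "Ob \<equiv> objs G s"
abbreviation "cmp \<equiv> comp_objs G s t"
abbreviation "C \<equiv> components_objs G s t"
definition u :: "'g set \<Rightarrow> 'a" where "u Z = (\<Sum>y\<in>Z. e y)"

lemma st: "g \<in> G \<Longrightarrow> s g \<in> G \<and> t g \<in> G"
  using grp unfolding groupoid_def by auto

lemma obj_fix: "x \<in> Ob \<Longrightarrow> s x = x \<and> t x = x"
  using grp unfolding groupoid_def by auto

lemma O_sub: "Ob \<subseteq> G"
  using st unfolding objs_def by auto

lemma mulG: "g \<in> G \<Longrightarrow> h \<in> G \<Longrightarrow> s g = t h \<Longrightarrow> mul g h \<in> G \<and> s (mul g h) = s h \<and> t (mul g h) = t g"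
  using grp unfolding groupoid_def by auto

lemma ivG: "g \<in> G \<Longrightarrow> iv g \<in> G \<and> s (iv g) = t g \<and> t (iv g) = s g"
  using grp unfolding groupoid_def by auto

lemma sO: "g \<in> G \<Longrightarrow> s g \<in> Ob"
  unfolding objs_def by auto

lemma tO: "g \<in> G \<Longrightarrow> t g \<in> Ob"
  using ivG[of g] unfolding objs_def by force

lemma finO: "finite Ob"
  unfolding objs_def using fin by auto

lemma e_idem: "g \<in> G \<Longrightarrow> e g * e g = e g"
  using upa unfolding unital_partial_action_def by auto

lemma e_t: "g \<in> G \<Longrightarrow> e g * e (t g) = e g"
  using upa unfolding unital_partial_action_def by auto

lemma e_iv: "g \<in> G \<Longrightarrow> e (iv g) * e (s g) = e (iv g)"
  using e_t[of "iv g"] ivG[of g] by auto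

lemma alpha_bij: "g \<in> G \<Longrightarrow> bij_betw (\<alpha> g) (principal (e (iv g))) (principal (e g))"
  using upa unfolding unital_partial_action_def by auto

lemma alpha_add: "g \<in> G \<Longrightarrow> a \<in> principal (e (iv g)) \<Longrightarrow> b \<in> principal (e (iv g)) \<Longrightarrow>
   \<alpha> g (a + b) = \<alpha> g a + \<alpha> g b"
  using upa unfolding unital_partial_action_def by auto

lemma alpha0: "g \<in> G \<Longrightarrow> \<alpha> g 0 = 0"
proof -
  assume g: "g \<in> G"
  have z: "0 \<in> principal (e (iv g))" unfolding principal_def by (auto intro: exI[of _ 0])
  have "\<alpha> g (0 + 0) = \<alpha> g 0 + \<alpha> g 0" using alpha_add[OF g z z] .
  then show ?thesis by simp
qed

lemma alpha_in: "g \<in> G \<Longrightarrow> \<alpha> g (b * e (iv g)) * e g = \<alpha> g (b * e (iv g))"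
proof -
  assume g: "g \<in> G"
  have "\<alpha> g (b * e (iv g)) \<in> principal (e g)"
    using alpha_bij[OF g] principal_mult[of b "e (iv g)"] unfolding bij_betw_def by auto
  then show ?thesis using principal_idem e_idem[OF g] by blast
qed

lemma u_e: "Z \<subseteq> Ob \<Longrightarrow> x \<in> Ob \<Longrightarrow> e x * u Z = (if x \<in> Z then e x else 0)"
proof -
  assume Z: "Z \<subseteq> Ob" and x: "x \<in> Ob"
  have fZ: "finite Z" using Z finO finite_subset by auto
  have "e x * u Z = (\<Sum>y\<in>Z. e x * e y)" unfolding u_def by (simp add: sum_distrib_left)
  also have "\<dots> = (\<Sum>y\<in>Z. if y = x then e x else 0)"
    apply (rule sum.cong, simp)
    using orth Z x e_idem O_sub by auto
  also have "\<dots> = (if x \<in> Z then e x else 0)"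
    using fZ by (simp add: sum.delta')
  finally show ?thesis .
qed

lemma u_idem: "Z \<subseteq> Ob \<Longrightarrow> u Z * u Z = u Z"
proof -
  assume Z: "Z \<subseteq> Ob"
  have "u Z * u Z = (\<Sum>y\<in>Z. e y * u Z)" unfolding u_def[of Z] by (simp add: sum_distrib_right)
  also have "\<dots> = (\<Sum>y\<in>Z. e y)" apply (rule sum.cong, simp) using u_e Z by (metis subsetD)
  finally show ?thesis unfolding u_def .
qed

lemma comp_sub: "cmp x \<subseteq> Ob" unfolding comp_objs_def by auto

lemma C_sub: "Z \<in> C \<Longrightarrow> Z \<subseteq> Ob" unfolding components_objs_def using comp_sub by auto

lemma comp_self: "x \<in> Ob \<Longrightarrow> x \<in> cmp x"
  unfolding comp_objs_def using obj_fix O_sub by blast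

lemma comp_eq: "x \<in> Ob \<Longrightarrow> y \<in> cmp x \<Longrightarrow> cmp y = cmp x"
proof -
  assume x: "x \<in> Ob" and y: "y \<in> cmp x"
  then obtain h where h: "h \<in> G" "s h = x" "t h = y" unfolding comp_objs_def by auto
  show ?thesis
  proof
    show "cmp y \<subseteq> cmp x"
    proof
      fix z assume "z \<in> cmp y"
      then obtain k where k: "k \<in> G" "s k = y" "t k = z" "z \<in> Ob" unfolding comp_objs_def by auto
      have "mul k h \<in> G \<and> s (mul k h) = x \<and> t (mul k h) = z" using mulG[of k h] h k by auto
      then show "z \<in> cmp x" using k unfolding comp_objs_def by blast
    qed
  next
    show "cmp x \<subseteq> cmp y"
    proof
      fix z assume "z \<in> cmp x"
      then obtain k where k: "k \<in> G" "s k = x" "t k = z" "z \<in> Ob" unfolding comp_objs_def by auto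
      have "mul k (iv h) \<in> G \<and> s (mul k (iv h)) = y \<and> t (mul k (iv h)) = z"
        using mulG[of k "iv h"] ivG[of h] h k by auto
      then show "z \<in> cmp y" using k unfolding comp_objs_def by blast
    qed
  qed
qed

lemma C_disj: "Z \<in> C \<Longrightarrow> Z' \<in> C \<Longrightarrow> x \<in> Z \<Longrightarrow> x \<in> Z' \<Longrightarrow> Z = Z'"
proof -
  assume "Z \<in> C" "Z' \<in> C" and x: "x \<in> Z" "x \<in> Z'"
  then obtain a b where ab: "a \<in> Ob" "b \<in> Ob" "Z = cmp a" "Z' = cmp b"
    unfolding components_objs_def by auto
  then show ?thesis using comp_eq[of a x] comp_eq[of b x] x by simp
qed

lemma C_fin: "finite C" unfolding components_objs_def using finO by auto

lemma g_comp: "g \<in> G \<Longrightarrow> cmp (s g) \<in> C \<and> s g \<in> cmp (s g) \<and> t g \<in> cmp (s g)"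
  unfolding components_objs_def using sO tO comp_self comp_objs_def by fastforce

lemma full_sub_iff: "Z \<in> C \<Longrightarrow> g \<in> G \<Longrightarrow> g \<in> full_sub G s t Z \<longleftrightarrow> Z = cmp (s g)"
  using g_comp C_disj unfolding full_sub_def by (metis comp_objs_def mem_Collect_eq)

lemma objs_sub: "Z \<in> C \<Longrightarrow> g \<in> full_sub G s t Z \<Longrightarrow> g \<in> objs (full_sub G s t Z) s \<longleftrightarrow> g \<in> Ob"
proof -
  assume Z: "Z \<in> C" and g: "g \<in> full_sub G s t Z"
  show ?thesis
  proof
    assume "g \<in> objs (full_sub G s t Z) s" then show "g \<in> Ob" unfolding objs_def full_sub_def by auto
  next
    assume "g \<in> Ob" then have "s g = g" using obj_fix by auto
    then show "g \<in> objs (full_sub G s t Z) s" using g unfolding objs_def by (metis image_eqI)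
  qed
qed

lemma eg_u: "Z \<in> C \<Longrightarrow> g \<in> G \<Longrightarrow> e g * u Z = (if t g \<in> Z then e g else 0)"
proof -
  assume Z: "Z \<in> C" and g: "g \<in> G"
  have "e g * u Z = e g * (e (t g) * u Z)" using e_t[OF g] by (metis mult.assoc)
  then show ?thesis using u_e[OF C_sub[OF Z] tO[OF g]] e_t[OF g] by auto
qed

lemma eiv_u: "Z \<in> C \<Longrightarrow> g \<in> G \<Longrightarrow> e (iv g) * u Z = (if s g \<in> Z then e (iv g) else 0)"
  using eg_u[of Z "iv g"] ivG[of g] by auto

lemma fwd:
  assumes L: "partial_galois (invariants G iv 1 e \<alpha>) G s iv 1 e \<alpha>" and Z: "Z \<in> C"
  shows "partial_galois (invariants (full_sub G s t Z) iv (u Z) e \<alpha>) (full_sub G s t Z) s iv (u Z) e \<alpha>"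
proof -
  from L obtain m and a b :: "nat \<Rightarrow> 'a" where m: "m \<ge> 1"
    and H: "\<forall>g\<in>G. (\<Sum>i<m. a i * \<alpha> g (b i * e (iv g))) = (if g \<in> Ob then e g else 0)"
    unfolding partial_galois_def by blast
  have "(\<Sum>i<m. (a i * u Z) * \<alpha> g ((b i * u Z) * e (iv g))) =
          (if g \<in> objs (full_sub G s t Z) s then e g else 0)" if g: "g \<in> full_sub G s t Z" for g
  proof -
    have gG: "g \<in> G" and sg: "s g \<in> Z" and tg: "t g \<in> Z" using g unfolding full_sub_def by auto
    have "(a i * u Z) * \<alpha> g ((b i * u Z) * e (iv g)) = a i * \<alpha> g (b i * e (iv g))" for i
    proof -
      have "(b i * u Z) * e (iv g) = b i * (e (iv g) * u Z)" by (simp add: ac_simps)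
      also have "\<dots> = b i * e (iv g)" using eiv_u[OF Z gG] sg by simp
      finally have 1: "(b i * u Z) * e (iv g) = b i * e (iv g)" .
      define X where "X = \<alpha> g (b i * e (iv g))"
      have X: "X * e g = X" unfolding X_def using alpha_in[OF gG] .
      have "(a i * u Z) * X = a i * (X * e g) * u Z" using X by (simp add: ac_simps)
      also have "\<dots> = a i * X * (e g * u Z)" by (simp add: ac_simps)
      also have "\<dots> = a i * (X * e g)" using eg_u[OF Z gG] tg by (simp add: mult.assoc)
      also have "\<dots> = a i * X" using X by simp
      finally show ?thesis using 1 X_def by simp
    qed
    then have "(\<Sum>i<m. (a i * u Z) * \<alpha> g ((b i * u Z) * e (iv g))) = (\<Sum>i<m. a i * \<alpha> g (b i * e (iv g)))"
      by simp
    also have "\<dots> = (if g \<in> Ob then e g else 0)" using H gG by simp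
    finally show ?thesis using objs_sub[OF Z g] by simp
  qed
  then show ?thesis unfolding partial_galois_def using m
    by (intro conjI refl exI[of _ m] exI[of _ "\<lambda>i. a i * u Z"] exI[of _ "\<lambda>i. b i * u Z"])
       (auto simp: principal_mult)
qed

lemma bwd:
  assumes R: "\<forall>Z\<in>C. partial_galois (invariants (full_sub G s t Z) iv (u Z) e \<alpha>) (full_sub G s t Z) s iv (u Z) e \<alpha>"
  shows "partial_galois (invariants G iv 1 e \<alpha>) G s iv 1 e \<alpha>"
proof -
  define P where "P Z m a b \<longleftrightarrow> m \<ge> 1 \<and> (\<forall>i<m. a i \<in> principal (u Z) \<and> b i \<in> principal (u Z)) \<and>
        (\<forall>g\<in>full_sub G s t Z. (\<Sum>i<m. a i * \<alpha> g (b i * e (iv g))) =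
                 (if g \<in> objs (full_sub G s t Z) s then e g else 0))" for Z m and a b :: "nat \<Rightarrow> 'a"
  have "\<forall>Z\<in>C. \<exists>x. P Z (fst x) (fst (snd x)) (snd (snd x))"
  proof
    fix Z assume Z: "Z \<in> C"
    have "partial_galois (invariants (full_sub G s t Z) iv (u Z) e \<alpha>) (full_sub G s t Z) s iv (u Z) e \<alpha>"
      using R Z by blast
    then obtain m and a b :: "nat \<Rightarrow> 'a" where "m \<ge> 1" "\<forall>i<m. a i \<in> principal (u Z) \<and> b i \<in> principal (u Z)"
      "\<forall>g\<in>full_sub G s t Z. (\<Sum>i<m. a i * \<alpha> g (b i * e (iv g))) =
                 (if g \<in> objs (full_sub G s t Z) s then e g else 0)"
      unfolding partial_galois_def by blast
    then have "P Z m a b" unfolding P_def by blast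
    then show "\<exists>x. P Z (fst x) (fst (snd x)) (snd (snd x))" by (intro exI[of _ "(m, a, b)"]) simp
  qed
  from bchoice[OF this] obtain f where f: "\<forall>Z\<in>C. P Z (fst (f Z)) (fst (snd (f Z))) (snd (snd (f Z)))"
    by blast
  define M where "M Z = fst (f Z)" for Z
  define A where "A Z i = (if i < M Z then fst (snd (f Z)) i else 0)" for Z i
  define B where "B Z i = (if i < M Z then snd (snd (f Z)) i else 0)" for Z i
  have fZ: "P Z (M Z) (fst (snd (f Z))) (snd (snd (f Z)))" if "Z \<in> C" for Z
    using f that unfolding M_def by blast
  have AB: "A Z i * u Z = A Z i \<and> B Z i * u Z = B Z i" if Z: "Z \<in> C" for Z i
  proof (cases "i < M Z")
    case True
    then have "fst (snd (f Z)) i \<in> principal (u Z) \<and> snd (snd (f Z)) i \<in> principal (u Z)"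
      using fZ[OF Z] unfolding P_def by blast
    then show ?thesis using True principal_idem[OF u_idem[OF C_sub[OF Z]]] unfolding A_def B_def by simp
  next
    case False then show ?thesis unfolding A_def B_def by simp
  qed
  have HZ: "(\<Sum>i<M Z. A Z i * \<alpha> g (B Z i * e (iv g))) =
                 (if g \<in> objs (full_sub G s t Z) s then e g else 0)"
    if Z: "Z \<in> C" and g: "g \<in> full_sub G s t Z" for Z g
  proof -
    have "(\<Sum>i<M Z. A Z i * \<alpha> g (B Z i * e (iv g))) =
       (\<Sum>i<M Z. fst (snd (f Z)) i * \<alpha> g (snd (snd (f Z)) i * e (iv g)))"
      unfolding A_def B_def by simp
    also have "\<dots> = (if g \<in> objs (full_sub G s t Z) s then e g else 0)"
      using fZ[OF Z] g unfolding P_def by blast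
    finally show ?thesis .
  qed
  define N where "N = max 1 (\<Sum>Z\<in>C. M Z)"
  define a where "a i = (\<Sum>Z\<in>C. A Z i)" for i
  define b where "b i = (\<Sum>Z\<in>C. B Z i)" for i
  have "(\<Sum>i<N. a i * \<alpha> g (b i * e (iv g))) = (if g \<in> Ob then e g else 0)" if gG: "g \<in> G" for g
  proof -
    define Z0 where "Z0 = cmp (s g)"
    have Z0: "Z0 \<in> C" "s g \<in> Z0" "t g \<in> Z0" using g_comp[OF gG] unfolding Z0_def by auto
    have g0: "g \<in> full_sub G s t Z0" using full_sub_iff[OF Z0(1) gG] Z0_def by simp
    have oth: "Z \<in> C \<Longrightarrow> Z \<noteq> Z0 \<Longrightarrow> s g \<notin> Z \<and> t g \<notin> Z" for Z
      using C_disj Z0 by blast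
    have trm: "a i * \<alpha> g (b i * e (iv g)) = A Z0 i * \<alpha> g (B Z0 i * e (iv g))" for i
    proof -
      have "b i * e (iv g) = (\<Sum>Z\<in>C. B Z i * e (iv g))" unfolding b_def by (simp add: sum_distrib_right)
      also have "\<dots> = B Z0 i * e (iv g)"
      proof (rule sum_single[OF C_fin Z0(1)])
        fix Z assume Z: "Z \<in> C" and ne: "Z \<noteq> Z0"
        have "B Z i * e (iv g) = B Z i * (e (iv g) * u Z)" using AB[OF Z, of i] by (metis mult.assoc mult.commute)
        then show "B Z i * e (iv g) = 0" using eiv_u[OF Z gG] oth[OF Z ne] by simp
      qed
      finally have 1: "b i * e (iv g) = B Z0 i * e (iv g)" .
      define X where "X = \<alpha> g (B Z0 i * e (iv g))"
      have X: "X * e g = X" unfolding X_def using alpha_in[OF gG] .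
      have "a i * X = (\<Sum>Z\<in>C. A Z i * X)" unfolding a_def by (simp add: sum_distrib_right)
      also have "\<dots> = A Z0 i * X"
      proof (rule sum_single[OF C_fin Z0(1)])
        fix Z assume Z: "Z \<in> C" and ne: "Z \<noteq> Z0"
        have "A Z i * X = A Z i * u Z * (X * e g)" using AB[OF Z, of i] X by simp
        also have "\<dots> = A Z i * X * (e g * u Z)" by (simp add: ac_simps)
        finally show "A Z i * X = 0" using eg_u[OF Z gG] oth[OF Z ne] by simp
      qed
      finally show ?thesis using 1 X_def by simp
    qed
    have MN: "M Z0 \<le> N" unfolding N_def using member_le_sum[OF Z0(1), of M] C_fin by simp
    have "(\<Sum>i<N. a i * \<alpha> g (b i * e (iv g))) = (\<Sum>i<N. A Z0 i * \<alpha> g (B Z0 i * e (iv g)))"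
      using trm by simp
    also have "\<dots> = (\<Sum>i<M Z0. A Z0 i * \<alpha> g (B Z0 i * e (iv g)))"
      by (rule sum.mono_neutral_cong_right) (use MN in \<open>auto simp: A_def\<close>)
    also have "\<dots> = (if g \<in> Ob then e g else 0)" using HZ[OF Z0(1) g0] objs_sub[OF Z0(1) g0] by simp
    finally show ?thesis .
  qed
  moreover have "N \<ge> 1" unfolding N_def by simp
  moreover have "\<forall>i<N. a i \<in> principal 1 \<and> b i \<in> principal 1" unfolding principal_iff by simp
  ultimately show ?thesis unfolding partial_galois_def
    by (intro conjI refl exI[of _ N] exI[of _ a] exI[of _ b]) auto
qed

end

theorem proposition2p11:
  fixes G :: "'g set" and s t :: "'g \<Rightarrow> 'g" and mul :: "'g \<Rightarrow> 'g \<Rightarrow> 'g"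
    and iv :: "'g \<Rightarrow> 'g"
    and e :: "'g \<Rightarrow> 'a::comm_ring_1" and \<alpha> :: "'g \<Rightarrow> 'a \<Rightarrow> 'a"
  assumes "groupoid G s t mul iv"
    and "finite G"
    and "unital_partial_action G s t mul iv 1 e \<alpha>"
    and "(\<Sum>z\<in>objs G s. e z) = 1"
    and "\<forall>z\<in>objs G s. \<forall>w\<in>objs G s. z \<noteq> w \<longrightarrow> e z * e w = 0"
  shows "partial_galois (invariants G iv 1 e \<alpha>) G s iv 1 e \<alpha> \<longleftrightarrow>
    (\<forall>Z\<in>components_objs G s t.
       partial_galois (invariants (full_sub G s t Z) iv (\<Sum>y\<in>Z. e y) e \<alpha>)
         (full_sub G s t Z) s iv (\<Sum>y\<in>Z. e y) e \<alpha>)"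
proof -
  interpret PA G s t mul iv e \<alpha> using assms by unfold_locales
  show ?thesis using fwd bwd unfolding u_def by blast
qed

end
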